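(* If $n$ is a prime number, or $n=4$, then there exists no u-p-cycle for $n$-permutations.
   Context: An $n$-permutation is a permutation of $\{1,\ldots,n\}$. For a word $w$ of distinct numbers, $\mathrm{red}(w)$ is obtained by replacing the $i$-th smallest letter by $i$. Let $\Diamond$ be a symbol not among the integers. A word $f=f_1\cdots f_n$ over the positive integers together with $\Diamond$, whose integer letters are pairwise distinct, covers an $n$-permutation $\pi$ if one can substitute real numbers for the occurrences of $\Diamond$ (independently) so that the resulting word has $n$ pairwise distinct entries and reduces to $\pi$; equivalently, $f_i<f_j\iff\pi_i<\pi_j$ for all positions $i,j$ holding integers. A u-p-cycle (universal partial cycle) for $n$-permutations is a cyclic word $u_1\cdots u_N$ with $N\geq n$ over this alphabet containing at least one $\Diamond$, indices read modulo $N$, such that each of its $N$ cyclic factors $u_iu_{i+1}\cdots u_{i+n-1}$ ($1\leq i\leq N$) has pairwise distinct integer letters and every $n$-permutation is covered by exactly one of these factors. *)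

theory Defs
  imports Complex_Main "HOL-Computational_Algebra.Primes"
begin

text \<open>Letters: None is the symbol Diamond, Some k is the positive integer k.
  An n-permutation is represented by its one-line notation as a list.\<close>

definition is_perm :: "nat \<Rightarrow> nat list \<Rightarrow> bool" where
  "is_perm n p \<longleftrightarrow> length p = n \<and> distinct p \<and> set p = {1..n}"

definition distinct_ints :: "nat option list \<Rightarrow> bool" where
  "distinct_ints f \<longleftrightarrow> distinct (filter (\<lambda>x. x \<noteq> None) f)"

text \<open>f covers p: substitute reals for the Diamonds so that the resulting word
  has pairwise distinct entries and its reduction equals p (the reduction
  replaces the i-th smallest letter by i).\<close>
definition covers :: "nat option list \<Rightarrow> nat list \<Rightarrow> bool" where
  "covers f p \<longleftrightarrow> length f = length p \<and>
     (\<exists>r :: nat \<Rightarrow> real.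
        (\<forall>i < length f. \<forall>a. f ! i = Some a \<longrightarrow> r i = real a) \<and>
        inj_on r {..<length f} \<and>
        (\<forall>i < length f. p ! i = card {j. j < length f \<and> r j \<le> r i}))"

text \<open>The cyclic factor of length n starting at position i (0-based, indices mod N).\<close>
definition cfactor :: "nat option list \<Rightarrow> nat \<Rightarrow> nat \<Rightarrow> nat option list" where
  "cfactor u n i = map (\<lambda>j. u ! ((i + j) mod length u)) [0..<n]"

definition upcycle :: "nat \<Rightarrow> nat option list \<Rightarrow> bool" where
  "upcycle n u \<longleftrightarrow>
     length u \<ge> n \<and> None \<in> set u \<and> (\<forall>x \<in> set u. x \<noteq> Some 0) \<and>
     (\<forall>i < length u. distinct_ints (cfactor u n i)) \<and>
     (\<forall>p. is_perm n p \<longrightarrow> (\<exists>!i. i < length u \<and> covers (cfactor u n i) p))"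

end

theory Submission
  imports Defs "HOL-Combinatorics.Multiset_Permutations"
begin

definition rk :: "nat \<Rightarrow> (nat \<Rightarrow> real) \<Rightarrow> nat list" where
  "rk n y = map (\<lambda>i. card {j. j < n \<and> y j \<le> y i}) [0..<n]"

lemma rk_less:
  fixes y :: "nat \<Rightarrow> real"
  assumes inj: "inj_on y {..<n}" and i: "i < n" and j: "j < n"
  shows "card {l. l < n \<and> y l \<le> y i} < card {l. l < n \<and> y l \<le> y j} \<longleftrightarrow> y i < y j"
proof
  assume yij: "y i < y j"
  have "{l. l < n \<and> y l \<le> y i} \<subseteq> {l. l < n \<and> y l \<le> y j}" using yij by auto
  moreover have "j \<notin> {l. l < n \<and> y l \<le> y i}" using yij by auto
  moreover have "j \<in> {l. l < n \<and> y l \<le> y j}" using j by auto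
  ultimately have "{l. l < n \<and> y l \<le> y i} \<subset> {l. l < n \<and> y l \<le> y j}" by blast
  thus "card {l. l < n \<and> y l \<le> y i} < card {l. l < n \<and> y l \<le> y j}"
    by (rule psubset_card_mono[rotated]) simp
next
  assume c: "card {l. l < n \<and> y l \<le> y i} < card {l. l < n \<and> y l \<le> y j}"
  show "y i < y j"
  proof (rule ccontr)
    assume "\<not> y i < y j"
    hence "{l. l < n \<and> y l \<le> y j} \<subseteq> {l. l < n \<and> y l \<le> y i}" by auto
    hence "card {l. l < n \<and> y l \<le> y j} \<le> card {l. l < n \<and> y l \<le> y i}"
      by (rule card_mono[rotated]) simp
    with c show False by simp
  qed
qed
lemma rk_nth: "i < n \<Longrightarrow> rk n y ! i = card {j. j < n \<and> y j \<le> y i}"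
  by (simp add: rk_def)

lemma rk_length[simp]: "length (rk n y) = n"
  by (simp add: rk_def)

lemma rk_order:
  fixes y :: "nat \<Rightarrow> real"
  assumes "inj_on y {..<n}" "i < n" "j < n"
  shows "rk n y ! i < rk n y ! j \<longleftrightarrow> y i < y j"
  using rk_less[OF assms] assms by (simp add: rk_nth)

lemma rk_perm:
  fixes y :: "nat \<Rightarrow> real"
  assumes inj: "inj_on y {..<n}"
  shows "is_perm n (rk n y)"
proof -
  have d: "distinct (rk n y)"
  proof (subst distinct_conv_nth, intro allI impI)
    fix i j assume "i < length (rk n y)" "j < length (rk n y)" "i \<noteq> j"
    hence ij: "i < n" "j < n" "i \<noteq> j" by auto
    hence "y i \<noteq> y j" using inj by (auto dest: inj_onD)
    hence "y i < y j \<or> y j < y i" by auto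
    thus "rk n y ! i \<noteq> rk n y ! j" using rk_order[OF inj ij(1,2)] rk_order[OF inj ij(2,1)] by auto
  qed
  have s: "set (rk n y) \<subseteq> {1..n}"
  proof
    fix v assume "v \<in> set (rk n y)"
    then obtain i where i: "i < n" "v = card {j. j < n \<and> y j \<le> y i}"
      by (auto simp: rk_def)
    have "card {j. j < n \<and> y j \<le> y i} \<le> card {..<n}" by (intro card_mono) auto
    moreover have "0 < card {j. j < n \<and> y j \<le> y i}" using i by (subst card_gt_0_iff) auto
    ultimately show "v \<in> {1..n}" using i by simp
  qed
  have "card (set (rk n y)) = n" using d distinct_card by fastforce
  hence "set (rk n y) = {1..n}" using s by (intro card_subset_eq) auto
  thus ?thesis using d by (simp add: is_perm_def)
qed

lemma perm_rk:
  assumes p: "is_perm n p"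
  shows "rk n (\<lambda>i. real (p ! i)) = p"
proof (rule nth_equalityI)
  show "length (rk n (\<lambda>i. real (p ! i))) = length p" using p by (simp add: is_perm_def)
next
  fix i assume "i < length (rk n (\<lambda>i. real (p ! i)))"
  hence i: "i < n" by simp
  have len: "length p = n" and dp: "distinct p" and sp: "set p = {1..n}" using p by (auto simp: is_perm_def)
  have pi: "p ! i \<in> {1..n}" using i len sp nth_mem by blast
  have "(\<lambda>j. p ! j) ` {j. j < n \<and> p ! j \<le> p ! i} = {1..p ! i}"
  proof
    show "(\<lambda>j. p ! j) ` {j. j < n \<and> p ! j \<le> p ! i} \<subseteq> {1..p ! i}"
      using sp len nth_mem by fastforce
  next
    show "{1..p ! i} \<subseteq> (\<lambda>j. p ! j) ` {j. j < n \<and> p ! j \<le> p ! i}"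
    proof
      fix v assume v: "v \<in> {1..p ! i}"
      hence "v \<in> set p" using sp pi by auto
      then obtain j where "j < n" "p ! j = v" using len by (auto simp: in_set_conv_nth)
      thus "v \<in> (\<lambda>j. p ! j) ` {j. j < n \<and> p ! j \<le> p ! i}" using v by auto
    qed
  qed
  moreover have "inj_on (\<lambda>j. p ! j) {j. j < n \<and> p ! j \<le> p ! i}"
    using dp len by (auto simp: inj_on_def nth_eq_iff_index_eq)
  ultimately have "card {j. j < n \<and> p ! j \<le> p ! i} = p ! i"
    by (metis card_atLeastAtMost card_image diff_Suc_1)
  thus "rk n (\<lambda>i. real (p ! i)) ! i = p ! i" using i by (simp add: rk_nth)
qed



definition consistent :: "nat option list \<Rightarrow> (nat \<Rightarrow> real) \<Rightarrow> bool" where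
  "consistent f y \<longleftrightarrow> (\<forall>i<length f. \<forall>j<length f. \<forall>a b. f ! i = Some a \<longrightarrow> f ! j = Some b \<longrightarrow>
      (a < b \<longleftrightarrow> y i < y j))"

lemma cov_cons:
  assumes "covers f p"
  shows "consistent f (\<lambda>i. real (p ! i))"
proof -
  obtain r :: "nat \<Rightarrow> real" where len: "length f = length p"
    and ag: "\<forall>i < length f. \<forall>a. f ! i = Some a \<longrightarrow> r i = real a"
    and inj: "inj_on r {..<length f}"
    and pr: "\<forall>i < length f. p ! i = card {j. j < length f \<and> r j \<le> r i}"
    using assms unfolding covers_def by blast
  show ?thesis unfolding consistent_def
  proof (intro allI impI)
    fix i j a b assume i: "i < length f" and j: "j < length f" and fa: "f ! i = Some a" and fb: "f ! j = Some b"
    have "a < b \<longleftrightarrow> r i < r j" using ag i j fa fb by auto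
    also have "\<dots> \<longleftrightarrow> p ! i < p ! j" using rk_less[OF inj i j] pr i j by simp
    finally show "a < b \<longleftrightarrow> real (p ! i) < real (p ! j)" by simp
  qed
qed

lemma consD:
  assumes "consistent f y" "i < length f" "j < length f" "f ! i = Some a" "f ! j = Some b"
  shows "a < b \<longleftrightarrow> y i < y j"
  using assms unfolding consistent_def by blast

lemma cons_cov:
  fixes y :: "nat \<Rightarrow> real"
  assumes len: "length f = n" and inj: "inj_on y {..<n}" and con: "consistent f y"
  shows "covers f (rk n y)"
proof -
  define S where "S i = {int a |a. \<exists>j<n. f ! j = Some a \<and> y j < y i}" for i
  define Lo where "Lo i = Max (insert (-1) (S i))" for i
  define \<rho> where "\<rho> i = real (card {j. j < n \<and> y j \<le> y i}) / real (n+1)" for i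
  define r where "r i = (case f ! i of Some a \<Rightarrow> real a | None \<Rightarrow> real_of_int (Lo i) + \<rho> i)" for i
  have finS: "finite (S i)" for i
  proof -
    have "S i \<subseteq> (\<lambda>j. int (the (f ! j))) ` {..<n}" unfolding S_def by force
    thus ?thesis by (rule finite_subset) simp
  qed
  have \<rho>lt: "\<rho> i < 1" if "i < n" for i
  proof -
    have "card {j. j < n \<and> y j \<le> y i} \<le> card {..<n}" by (intro card_mono) auto
    thus ?thesis unfolding \<rho>_def by (simp add: field_simps)
  qed
  have \<rho>gt: "0 < \<rho> i" if "i < n" for i
  proof -
    have "0 < card {j. j < n \<and> y j \<le> y i}" using that by (subst card_gt_0_iff) auto
    thus ?thesis unfolding \<rho>_def by simp
  qed
  have \<rho>mono: "\<rho> i < \<rho> j" if "i < n" "j < n" "y i < y j" for i j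
    using rk_less[OF inj that(1,2)] that unfolding \<rho>_def by (simp add: divide_strict_right_mono)
  have mono: "r i < r j" if ij: "i < n" "j < n" and yij: "y i < y j" for i j
  proof (cases "f ! i")
    case None note fi = None
    show ?thesis
    proof (cases "f ! j")
      case None
      have "S i \<subseteq> S j" unfolding S_def using yij by force
      hence "Lo i \<le> Lo j" unfolding Lo_def using finS by (intro Max_mono) auto
      thus ?thesis using fi None \<rho>mono[OF ij yij] unfolding r_def by simp
    next
      case (Some b)
      have "\<forall>x \<in> insert (-1) (S i). x \<le> int b - 1"
      proof
        fix x assume "x \<in> insert (-1) (S i)"
        then consider "x = -1" | a j' where "x = int a" "j' < n" "f ! j' = Some a" "y j' < y i"
          unfolding S_def by auto
        thus "x \<le> int b - 1"
        proof cases
          case 1 thus ?thesis by simp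
        next
          case 2
          have "a < b" using consD[OF con, of j' j a b] 2 Some ij len yij by simp
          thus ?thesis using 2 by simp
        qed
      qed
      hence "Lo i \<le> int b - 1" unfolding Lo_def using finS by simp
      thus ?thesis using fi Some \<rho>lt[OF ij(1)] unfolding r_def by simp
    qed
  next
    case (Some a) note fi = Some
    show ?thesis
    proof (cases "f ! j")
      case None
      have "int a \<in> S j" unfolding S_def using ij fi yij by blast
      hence "int a \<le> Lo j" unfolding Lo_def using finS by simp
      thus ?thesis using fi None \<rho>gt[OF ij(2)] unfolding r_def by simp
    next
      case (Some b)
      have "a < b" using consD[OF con, of i j a b] fi Some ij len yij by simp
      thus ?thesis using fi Some unfolding r_def by simp
    qed
  qed
  have req: "r j \<le> r i \<longleftrightarrow> y j \<le> y i" if "i < n" "j < n" for i j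
  proof
    assume "r j \<le> r i"
    thus "y j \<le> y i" using mono[OF that] by (meson linorder_not_le)
  next
    assume "y j \<le> y i"
    moreover have "y j \<noteq> y i \<or> j = i" using inj that by (auto simp: inj_on_def)
    ultimately have "y j < y i \<or> j = i" by auto
    thus "r j \<le> r i" using mono[OF that(2,1)] by auto
  qed
  show ?thesis unfolding covers_def
  proof (intro conjI exI[of _ r])
    show "length f = length (rk n y)" using len by simp
    show "\<forall>i<length f. \<forall>a. f ! i = Some a \<longrightarrow> r i = real a" unfolding r_def by simp
    show "inj_on r {..<length f}"
    proof (rule inj_onI)
      fix i j assume "i \<in> {..<length f}" "j \<in> {..<length f}" "r i = r j"
      hence "i < n" "j < n" "r i = r j" using len by auto
      hence "y i = y j" using req[of i j] req[of j i] by auto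
      thus "i = j" using inj \<open>i < n\<close> \<open>j < n\<close> by (auto simp: inj_on_def)
    qed
    show "\<forall>i<length f. rk n y ! i = card {j. j < length f \<and> r j \<le> r i}"
    proof (intro allI impI)
      fix i assume i: "i < length f"
      have "{j. j < n \<and> r j \<le> r i} = {j. j < n \<and> y j \<le> y i}" using req i len by auto
      thus "rk n y ! i = card {j. j < length f \<and> r j \<le> r i}" using i len by (simp add: rk_nth)
    qed
  qed
qed

lemma cov_iff_rk:
  fixes y :: "nat \<Rightarrow> real"
  assumes len: "length f = n" and inj: "inj_on y {..<n}"
  shows "covers f (rk n y) \<longleftrightarrow> consistent f y"
proof
  assume "covers f (rk n y)"
  hence c: "consistent f (\<lambda>i. real (rk n y ! i))" by (rule cov_cons)
  show "consistent f y" unfolding consistent_def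
  proof (intro allI impI)
    fix i j a b assume ij: "i < length f" "j < length f" and fab: "f ! i = Some a" "f ! j = Some b"
    have "a < b \<longleftrightarrow> real (rk n y ! i) < real (rk n y ! j)"
      using c ij fab unfolding consistent_def by blast
    also have "\<dots> \<longleftrightarrow> y i < y j" using rk_order[OF inj, of i j] ij len by simp
    finally show "a < b \<longleftrightarrow> y i < y j" .
  qed
qed (rule cons_cov[OF assms])

lemma cov_iff_perm:
  assumes len: "length f = n" and p: "is_perm n p"
  shows "covers f p \<longleftrightarrow> consistent f (\<lambda>i. real (p ! i))"
proof -
  have lp: "length p = n" and dp: "distinct p" using p by (auto simp: is_perm_def)
  have inj: "inj_on (\<lambda>i. real (p ! i)) {..<n}"
  proof (rule inj_onI)
    fix i j assume "i \<in> {..<n}" "j \<in> {..<n}" "real (p ! i) = real (p ! j)"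
    thus "i = j" using dp lp nth_eq_iff_index_eq by fastforce
  qed
  show ?thesis using cov_iff_rk[OF len inj] perm_rk[OF p] by simp
qed

lemma distinct_filter_nth:
  assumes "distinct (filter P xs)" "i < length xs" "j < length xs" "P (xs ! i)" "xs ! i = xs ! j"
  shows "i = j"
  using assms
proof (induction xs arbitrary: i j)
  case Nil thus ?case by simp
next
  case (Cons x xs)
  show ?case
  proof (cases i)
    case 0
    show ?thesis
    proof (cases j)
      case (Suc j')
      hence "xs ! j' \<in> set (filter P xs)" using Cons.prems 0 by auto
      thus ?thesis using Cons.prems 0 Suc by auto
    qed (simp add: 0)
  next
    case (Suc i')
    show ?thesis
    proof (cases j)
      case 0
      hence "xs ! i' \<in> set (filter P xs)" using Cons.prems Suc by auto
      thus ?thesis using Cons.prems 0 Suc by auto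
    next
      case (Suc j')
      have "distinct (filter P xs)" using Cons.prems by (cases "P x") auto
      thus ?thesis using Cons.IH[of i' j'] Cons.prems Suc \<open>i = Suc i'\<close> by auto
    qed
  qed
qed

lemma dint:
  assumes "distinct_ints f" "i < length f" "j < length f" "f ! i = Some a" "f ! j = Some a"
  shows "i = j"
  using distinct_filter_nth[of "\<lambda>x. x \<noteq> None" f i j] assms unfolding distinct_ints_def by auto

lemma cf_len[simp]: "length (cfactor u n i) = n"
  by (simp add: cfactor_def)

lemma cf_nth: "t < n \<Longrightarrow> cfactor u n i ! t = u ! ((i + t) mod length u)"
  by (simp add: cfactor_def)

lemma cf_mod: "cfactor u n (i mod length u) = cfactor u n i"
  by (simp add: cfactor_def mod_add_left_eq)

lemma exists_cov:
  assumes len: "length f = n" and di: "distinct_ints f"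
  shows "\<exists>p. is_perm n p \<and> covers f p"
proof -
  define y where "y t = (case f ! t of Some a \<Rightarrow> real a | None \<Rightarrow> - (real t + 1))" for t
  have inj: "inj_on y {..<n}"
  proof (rule inj_onI)
    fix i j assume i: "i \<in> {..<n}" and j: "j \<in> {..<n}" and e: "y i = y j"
    show "i = j"
    proof (cases "f ! i")
      case None note fi = None
      show ?thesis
      proof (cases "f ! j")
        case None thus ?thesis using e fi unfolding y_def by simp
      next
        case (Some b) thus ?thesis using e fi unfolding y_def by simp
      qed
    next
      case (Some a) note fi = Some
      show ?thesis
      proof (cases "f ! j")
        case None thus ?thesis using e fi unfolding y_def by simp
      next
        case (Some b)
        hence "a = b" using e fi unfolding y_def by simp
        thus ?thesis using dint[OF di, of i j a] i j len fi Some by simp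
      qed
    qed
  qed
  have "consistent f y" unfolding consistent_def y_def by auto
  hence "covers f (rk n y)" using cov_iff_rk[OF len inj] by simp
  thus ?thesis using rk_perm[OF inj] by blast
qed

lemma allnone_cov:
  assumes len: "length f = n" and none: "\<forall>t<n. f ! t = None" and p: "is_perm n p"
  shows "covers f p"
  using cov_iff_perm[OF len p] none len unfolding consistent_def by auto

lemma up_unique:
  assumes "upcycle n u" "is_perm n p" "i < length u" "j < length u"
    "covers (cfactor u n i) p" "covers (cfactor u n j) p"
  shows "i = j"
  using assms unfolding upcycle_def by blast

lemma up_exists:
  assumes "upcycle n u" "is_perm n p"
  obtains i where "i < length u" "covers (cfactor u n i) p"
  using assms unfolding upcycle_def by blast

lemma up_di:
  assumes "upcycle n u"
  shows "distinct_ints (cfactor u n i)"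
proof -
  have "length u \<ge> n" using assms unfolding upcycle_def by simp
  have "0 < length u" using assms unfolding upcycle_def by auto
  hence "i mod length u < length u" by simp
  hence "distinct_ints (cfactor u n (i mod length u))" using assms unfolding upcycle_def by blast
  thus ?thesis by (simp add: cf_mod)
qed

lemma ex_avoid:
  fixes a :: real
  assumes "finite F"
  shows "\<exists>z. a < z \<and> z < a + 1 \<and> z \<notin> F"
proof -
  have "infinite ({a<..<a+1} - F)" using assms by (intro Diff_infinite_finite) auto
  hence "{a<..<a+1} - F \<noteq> {}" by (metis finite.emptyI)
  thus ?thesis by auto
qed

lemma stepA:
  assumes up: "upcycle n u" and n2: "2 \<le> n" and pN: "p < length u" and pn: "u ! p = None"
  shows "u ! ((p + n) mod length u) = None"
proof (rule ccontr)
  define N where "N = length u"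
  have Nn: "n \<le> N" using up unfolding upcycle_def N_def by simp
  hence N0: "0 < N" using n2 by simp
  define w where "w i = cfactor u n i" for i
  have wn: "w i ! t = u ! ((i + t) mod N)" if "t < n" for i t
    using that unfolding w_def N_def by (simp add: cf_nth)
  have wl: "length (w i) = n" for i unfolding w_def by simp
  have wdi: "distinct_ints (w i)" for i unfolding w_def using up_di[OF up] .
  assume "u ! ((p + n) mod length u) \<noteq> None"
  then obtain b where ub: "u ! ((p + n) mod N) = Some b" unfolding N_def by auto
  define q where "q = (p + 1) mod N"
  have qN: "q < N" unfolding q_def using N0 by simp
  have qp: "q \<noteq> p"
  proof
    assume "q = p"
    show False
    proof (cases "p + 1 < N")
      case True thus False using \<open>q = p\<close> unfolding q_def by simp
    next
      case False
      hence "p + 1 = N" using pN N_def by simp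
      hence "q = 0" unfolding q_def by simp
      thus False using \<open>q = p\<close> \<open>p + 1 = N\<close> Nn n2 by simp
    qed
  qed
  have wq: "w q ! t = u ! ((p + 1 + t) mod N)" if "t < n" for t
    using wn[OF that, of q] unfolding q_def by (simp add: mod_add_left_eq)
  have wqb: "w q ! (n - 1) = Some b" using wq[of "n - 1"] n2 ub by simp
  have wp: "w p ! t = u ! ((p + t) mod N)" if "t < n" for t using wn[OF that] .
  show False
  proof (cases "\<exists>s. 1 \<le> s \<and> s \<le> n - 1 \<and> u ! ((p + s) mod N) \<noteq> None")
    case False
    have "\<forall>t<n. w p ! t = None"
    proof (intro allI impI)
      fix t assume t: "t < n"
      show "w p ! t = None"
      proof (cases "t = 0")
        case True thus ?thesis using wp[OF t] pn pN N_def by simp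
      next
        case False thus ?thesis using wp[OF t] \<open>\<not> (\<exists>s. _)\<close> t by auto
      qed
    qed
    obtain \<pi> where pi: "is_perm n \<pi>" "covers (w q) \<pi>" using exists_cov[OF wl wdi] by blast
    have "covers (w p) \<pi>" using allnone_cov[OF wl \<open>\<forall>t<n. w p ! t = None\<close> pi(1)] .
    hence "p = q" using up_unique[OF up pi(1), of p q] pN qN pi(2) N_def unfolding w_def by simp
    thus False using qp by simp
  next
    case True
    then obtain s c where s: "1 \<le> s" "s \<le> n - 1" and uc: "u ! ((p + s) mod N) = Some c" by auto
    define M where "M = Max (insert 0 {a. Some a \<in> set u})"
    have finL: "finite {a. Some a \<in> set u}"
    proof -
      have "{a. Some a \<in> set u} \<subseteq> the ` set u" by force
      thus ?thesis by (rule finite_subset) simp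
    qed
    have leM: "a \<le> M" if "Some a \<in> set u" for a
      unfolding M_def using finL that by simp
    have uleM: "a \<le> M" if "u ! ((p + 1 + t) mod N) = Some a" for t a
    proof -
      have "(p + 1 + t) mod N < N" using N0 by simp
      hence "u ! ((p + 1 + t) mod N) \<in> set u" unfolding N_def by simp
      thus ?thesis using that leM by simp
    qed
    have cM: "c \<le> M" using uleM[of "s - 1" c] uc s by simp
    define x where "x t = (if t < n - 1 then (case u ! ((p + 1 + t) mod N) of Some a \<Rightarrow> real a
        | None \<Rightarrow> - (real t + 1)) else (if b < c then real M + 1 else - (real n + 1)))" for t
    have wpx: "x t = real a" if "w p ! (t + 1) = Some a" "t < n - 1" for t a
    proof -
      have "t + 1 < n" using that by simp
      thus ?thesis using wp[of "t + 1"] that unfolding x_def by (simp add: add.assoc)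
    qed
    have xlast: "x (n - 1) = (if b < c then real M + 1 else - (real n + 1))" unfolding x_def by simp
    have xcases: "(\<exists>a. x t = real a \<and> a \<le> M \<and> w p ! (t + 1) = Some a) \<or> (x t = - (real t + 1) \<and> w p ! (t + 1) = None)"
      if "t < n - 1" for t
    proof (cases "u ! ((p + 1 + t) mod N)")
      case None thus ?thesis using that wp[of "t + 1"] unfolding x_def by (simp add: add.assoc)
    next
      case (Some a) thus ?thesis using that wp[of "t + 1"] uleM[OF Some] unfolding x_def
        by (simp add: add.assoc)
    qed
    have xinj: "inj_on x {..<n}"
    proof (rule inj_onI)
      fix i j assume i: "i \<in> {..<n}" and j: "j \<in> {..<n}" and e: "x i = x j"
      show "i = j"
      proof (cases "i < n - 1")
        case True note ilt = True
        show ?thesis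
        proof (cases "j < n - 1")
          case True
          from xcases[OF ilt] xcases[OF True] e show ?thesis
          proof (elim disjE exE conjE)
            fix a a' assume "x i = real a" "w p ! (i + 1) = Some a" "x j = real a'" "w p ! (j + 1) = Some a'"
            hence "w p ! (i + 1) = Some a" "w p ! (j + 1) = Some a" using e by auto
            thus "i = j" using dint[OF wdi[of p], of "i + 1" "j + 1" a] wl ilt True by simp
          qed simp_all
        next
          case False
          hence jn: "j = n - 1" using j by simp
          from xcases[OF ilt] show ?thesis
          proof (elim disjE exE conjE)
            fix a assume "x i = real a" "a \<le> M"
            thus "i = j" using e xlast jn by (auto split: if_splits)
          next
            assume "x i = - (real i + 1)"
            thus "i = j" using e xlast jn ilt by (auto split: if_splits)
          qed
        qed
      next
        case False
        hence in1: "i = n - 1" using i by simp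
        show ?thesis
        proof (cases "j < n - 1")
          case True
          from xcases[OF True] show ?thesis
          proof (elim disjE exE conjE)
            fix a assume "x j = real a" "a \<le> M"
            thus "i = j" using e xlast in1 by (auto split: if_splits)
          next
            assume "x j = - (real j + 1)"
            thus "i = j" using e xlast in1 True by (auto split: if_splits)
          qed
        next
          case False thus ?thesis using j in1 by simp
        qed
      qed
    qed
    define \<pi> where "\<pi> = rk n x"
    have pip: "is_perm n \<pi>" unfolding \<pi>_def using rk_perm[OF xinj] .
    have notq: "\<not> covers (w q) \<pi>"
    proof
      assume "covers (w q) \<pi>"
      hence con: "consistent (w q) x" unfolding \<pi>_def using cov_iff_rk[OF wl xinj] by simp
      have wqc: "w q ! (s - 1) = Some c" using wq[of "s - 1"] s uc n2 by simp
      have "s - 1 \<noteq> n - 1" using s n2 by simp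
      moreover have sl: "s - 1 < n" "n - 1 < n" using s n2 by auto
      ultimately have bc: "b \<noteq> c" using dint[OF wdi[of q], of "s - 1" "n - 1" c] wqc wqb wl by auto
      have xs: "x (s - 1) = real c" using wpx[of "s - 1" c] wp[of s] uc s n2 by simp
      have "c < b \<longleftrightarrow> x (s - 1) < x (n - 1)" using consD[OF con, of "s - 1" "n - 1" c b] wqc wqb wl s n2 by simp
      thus False using xs xlast bc cM by (auto split: if_splits)
    qed
    obtain i where iN: "i < N" and covi: "covers (w i) \<pi>" using up_exists[OF up pip] unfolding w_def N_def by blast
    have iq: "i \<noteq> q" using notq covi by auto
    obtain r :: "nat \<Rightarrow> real" where
      ag: "\<forall>t < n. \<forall>a. w i ! t = Some a \<longrightarrow> r t = real a"
      and rinj: "inj_on r {..<n}"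
      and pr: "\<forall>t < n. \<pi> ! t = card {j. j < n \<and> r j \<le> r t}"
      using covi unfolding covers_def wl by blast
    have ord: "r t < r t' \<longleftrightarrow> x t < x t'" if "t < n" "t' < n" for t t'
    proof -
      have "r t < r t' \<longleftrightarrow> \<pi> ! t < \<pi> ! t'" using rk_less[OF rinj that] pr that by simp
      also have "\<dots> \<longleftrightarrow> x t < x t'" unfolding \<pi>_def using rk_order[OF xinj that] .
      finally show ?thesis .
    qed
    define i' where "i' = (i + N - 1) mod N"
    have i'N: "i' < N" unfolding i'_def using N0 by simp
    have wsh: "w i' ! (t + 1) = w i ! t" if "t < n - 1" for t
    proof -
      have "((i + N - 1) mod N + (t + 1)) mod N = (i + N - 1 + (t + 1)) mod N" by (rule mod_add_left_eq)
      also have "i + N - 1 + (t + 1) = (i + t) + N" using N0 by simp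
      also have "((i + t) + N) mod N = (i + t) mod N" by simp
      finally show ?thesis using wn[of "t + 1" i'] wn[of t i] that unfolding i'_def by simp
    qed
    define a0 where "a0 = (case w i' ! 0 of Some a \<Rightarrow> a | None \<Rightarrow> 0)"
    obtain z where z: "real a0 < z" "z < real a0 + 1" "z \<notin> r ` {..<n}"
      using ex_avoid[of "r ` {..<n}" "real a0"] by auto
    define y where "y t = (if t = 0 then z else r (t - 1))" for t
    have yinj: "inj_on y {..<n}"
    proof (rule inj_onI)
      fix s t assume s: "s \<in> {..<n}" and t: "t \<in> {..<n}" and e: "y s = y t"
      show "s = t"
      proof (cases "s = 0")
        case True
        show ?thesis
        proof (rule ccontr)
          assume "s \<noteq> t"
          hence "z = r (t - 1)" "t - 1 < n" using e True t unfolding y_def by auto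
          thus False using z(3) by auto
        qed
      next
        case False note s0 = False
        show ?thesis
        proof (cases "t = 0")
          case True
          hence "z = r (s - 1)" "s - 1 < n" using e s0 s unfolding y_def by auto
          thus ?thesis using z(3) by auto
        next
          case False
          hence "r (s - 1) = r (t - 1)" using e s0 unfolding y_def by simp
          hence "s - 1 = t - 1" using rinj s t by (auto simp: inj_on_def)
          thus ?thesis using s0 False by simp
        qed
      qed
    qed
    have ys: "y s = r (s - 1)" if "s \<noteq> 0" for s using that unfolding y_def by simp
    have y0: "y 0 = z" unfolding y_def by simp
    have zlt: "(a < b \<longleftrightarrow> z < real b) \<and> (b < a \<longleftrightarrow> real b < z)" if "a0 = a" "a \<noteq> b" for a b
      using z(1,2) that by auto
    have wi's: "w i' ! s = Some a \<Longrightarrow> s \<noteq> 0 \<Longrightarrow> s < n \<Longrightarrow> y s = real a" for s a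
      using wsh[of "s - 1"] ag ys[of s] by auto
    have c1: "consistent (w i') y" unfolding consistent_def wl
    proof (intro allI impI)
      fix s t a b assume s: "s < n" and t: "t < n" and fa: "w i' ! s = Some a" and fb: "w i' ! t = Some b"
      show "a < b \<longleftrightarrow> y s < y t"
      proof (cases "s = 0")
        case True note s0 = True
        show ?thesis
        proof (cases "t = 0")
          case True thus ?thesis using s0 fa fb by simp
        next
          case False
          have "a \<noteq> b" using dint[OF wdi[of i'], of s t a] s t fa fb wl s0 False by auto
          moreover have "a0 = a" unfolding a0_def using s0 fa by simp
          ultimately show ?thesis using zlt[of a b] wi's[OF fb False t] s0 y0 by simp
        qed
      next
        case False note s0 = False
        show ?thesis
        proof (cases "t = 0")
          case True
          have "a \<noteq> b" using dint[OF wdi[of i'], of s t a] s t fa fb wl s0 True by auto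
          moreover have "a0 = b" unfolding a0_def using True fb by simp
          ultimately show ?thesis using zlt[of b a] wi's[OF fa s0 s] True y0 by auto
        next
          case False
          show ?thesis using wi's[OF fa s0 s] wi's[OF fb False t] by simp
        qed
      qed
    qed
    have c2: "consistent (w p) y" unfolding consistent_def wl
    proof (intro allI impI)
      fix s t a b assume s: "s < n" and t: "t < n" and fa: "w p ! s = Some a" and fb: "w p ! t = Some b"
      have s0: "s \<noteq> 0" using fa wp[of 0] pn pN N_def n2 by (cases "s = 0") auto
      have t0: "t \<noteq> 0" using fb wp[of 0] pn pN N_def n2 by (cases "t = 0") auto
      have xa: "x (s - 1) = real a" using wpx[of "s - 1" a] fa s s0 by simp
      have xb: "x (t - 1) = real b" using wpx[of "t - 1" b] fb t t0 by simp
      have "a < b \<longleftrightarrow> x (s - 1) < x (t - 1)" using xa xb by simp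
      also have "\<dots> \<longleftrightarrow> r (s - 1) < r (t - 1)" using ord[of "s - 1" "t - 1"] s t by simp
      also have "\<dots> \<longleftrightarrow> y s < y t" using ys s0 t0 by simp
      finally show "a < b \<longleftrightarrow> y s < y t" .
    qed
    have pyp: "is_perm n (rk n y)" using rk_perm[OF yinj] .
    have "covers (w i') (rk n y)" using cov_iff_rk[OF wl yinj] c1 by simp
    moreover have "covers (w p) (rk n y)" using cov_iff_rk[OF wl yinj] c2 by simp
    ultimately have "i' = p" using up_unique[OF up pyp, of i' p] i'N pN N_def unfolding w_def by simp
    hence "i = q"
    proof (cases i)
      case 0
      hence "p = N - 1" using \<open>i' = p\<close> N0 unfolding i'_def by simp
      thus ?thesis using 0 N0 unfolding q_def by simp
    next
      case (Suc i0)
      hence "i + N - 1 = i0 + N" by simp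
      hence "p = i0" using \<open>i' = p\<close> iN Suc unfolding i'_def by simp
      thus ?thesis using Suc iN unfolding q_def by simp
    qed
    thus False using iq by simp
  qed
qed

definition consN :: "nat option list \<Rightarrow> nat list \<Rightarrow> bool" where
  "consN f p \<longleftrightarrow> (\<forall>i<length f. \<forall>j<length f. \<forall>a b. f ! i = Some a \<longrightarrow> f ! j = Some b \<longrightarrow>
      (a < b \<longleftrightarrow> p ! i < p ! j))"

lemma cov_iff_consN:
  assumes "length f = n" "is_perm n p"
  shows "covers f p \<longleftrightarrow> consN f p"
  using cov_iff_perm[OF assms] unfolding consistent_def consN_def by simp

lemma consND:
  assumes "consN f p" "i < length f" "j < length f" "f ! i = Some a" "f ! j = Some b"
  shows "a < b \<longleftrightarrow> p ! i < p ! j"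
  using assms unfolding consN_def by blast

lemma inj_aux:
  assumes len: "length f = n" and p: "is_perm n p" and q: "is_perm n q"
    and cp: "consN f p" and cq: "consN f q"
    and agree: "\<forall>t<n. f ! t = None \<longrightarrow> p ! t = q ! t"
    and t0: "t0 < n" "p ! t0 \<noteq> q ! t0"
    and minp: "\<forall>t<n. p ! t \<noteq> q ! t \<longrightarrow> p ! t0 \<le> p ! t \<and> p ! t0 \<le> q ! t"
  shows False
proof -
  have lp: "length p = n" and dp: "distinct p" and sp: "set p = {1..n}" using p by (auto simp: is_perm_def)
  have lq: "length q = n" and dq: "distinct q" and sq: "set q = {1..n}" using q by (auto simp: is_perm_def)
  obtain a0 where fa0: "f ! t0 = Some a0" using agree t0 by (cases "f ! t0") auto
  have "p ! t0 \<in> set q" using sp sq lp t0 nth_mem by metis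
  then obtain t1 where t1: "t1 < n" "q ! t1 = p ! t0" using lq by (auto simp: in_set_conv_nth)
  have t10: "t1 \<noteq> t0" using t1 t0 by auto
  have e1: "p ! t1 \<noteq> q ! t1"
  proof
    assume "p ! t1 = q ! t1"
    hence "p ! t1 = p ! t0" using t1 by simp
    hence "t1 = t0" using dp lp t1 t0 nth_eq_iff_index_eq by metis
    thus False using t10 by simp
  qed
  obtain a1 where fa1: "f ! t1 = Some a1" using agree t1 e1 by (cases "f ! t1") auto
  have "p ! t0 < p ! t1" using minp t1 e1 t1(2) by fastforce
  hence "a0 < a1" using consND[OF cp, of t0 t1 a0 a1] len t0 t1 fa0 fa1 by simp
  moreover have "q ! t1 < q ! t0" using minp t0 t1 by fastforce
  hence "a1 < a0" using consND[OF cq, of t1 t0 a1 a0] len t0 t1 fa0 fa1 by simp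
  ultimately show False by simp
qed

lemma inj_cov:
  assumes len: "length f = n" and p: "is_perm n p" and q: "is_perm n q"
    and cp: "consN f p" and cq: "consN f q"
    and agree: "\<forall>t<n. f ! t = None \<longrightarrow> p ! t = q ! t"
  shows "p = q"
proof (rule ccontr)
  assume pq: "p \<noteq> q"
  have lp: "length p = n" and lq: "length q = n" using p q by (auto simp: is_perm_def)
  define E where "E = {t. t < n \<and> p ! t \<noteq> q ! t}"
  have "E \<noteq> {}"
  proof
    assume "E = {}"
    hence "\<forall>t<n. p ! t = q ! t" unfolding E_def by auto
    hence "p = q" using lp lq by (auto intro: nth_equalityI)
    thus False using pq by simp
  qed
  have fE: "finite E" unfolding E_def by simp
  define V where "V = (\<lambda>t. p ! t) ` E \<union> (\<lambda>t. q ! t) ` E"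
  have fV: "finite V" "V \<noteq> {}" using fE \<open>E \<noteq> {}\<close> unfolding V_def by auto
  define m where "m = Min V"
  have mV: "m \<in> V" unfolding m_def using fV by simp
  have mle: "m \<le> v" if "v \<in> V" for v unfolding m_def using fV that by simp
  from mV consider t0 where "t0 \<in> E" "m = p ! t0" | t0 where "t0 \<in> E" "m = q ! t0" unfolding V_def by auto
  thus False
  proof cases
    case 1
    show False
    proof (rule inj_aux[OF len p q cp cq agree])
      show "t0 < n" "p ! t0 \<noteq> q ! t0" using 1 unfolding E_def by auto
      show "\<forall>t<n. p ! t \<noteq> q ! t \<longrightarrow> p ! t0 \<le> p ! t \<and> p ! t0 \<le> q ! t"
        using mle 1 unfolding V_def E_def by auto
    qed
  next
    case 2
    show False
    proof (rule inj_aux[OF len q p cq cp])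
      show "\<forall>t<n. f ! t = None \<longrightarrow> q ! t = p ! t" using agree by simp
      show "t0 < n" "q ! t0 \<noteq> p ! t0" using 2 unfolding E_def by auto
      show "\<forall>t<n. q ! t \<noteq> p ! t \<longrightarrow> q ! t0 \<le> q ! t \<and> q ! t0 \<le> p ! t"
        using mle 2 unfolding V_def E_def by auto
    qed
  qed
qed

lemma surj_cov:
  assumes len: "length f = n" and di: "distinct_ints f"
    and Dd: "D = filter (\<lambda>t. f ! t = None) [0..<n]"
    and xl: "length xs = length D" and xd: "distinct xs" and xsub: "set xs \<subseteq> {1..n}"
  shows "\<exists>p. is_perm n p \<and> consN f p \<and> map (\<lambda>t. p ! t) D = xs"
proof -
  define k where "k = length D"
  have setD: "set D = {t. t < n \<and> f ! t = None}" unfolding Dd by auto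
  have dD: "distinct D" unfolding Dd by simp
  define S where "S = {t. t < n \<and> f ! t \<noteq> None}"
  have cD: "card (set D) = k" unfolding k_def using dD distinct_card by blast
  have u: "{..<n} = set D \<union> S" and dj: "set D \<inter> S = {}" unfolding setD S_def by auto
  have "card (set D \<union> S) = card (set D) + card S"
    by (rule card_Un_disjoint) (use dj in \<open>auto simp: S_def\<close>)
  hence "card (set D) + card S = n" using u by (metis card_lessThan)
  hence cS: "card S = n - k" using cD by simp
  define V where "V = {1..n} - set xs"
  have cxs: "card (set xs) = k" using xd xl distinct_card unfolding k_def by metis
  have cV: "card V = n - k" unfolding V_def using xsub cxs by (simp add: card_Diff_subset)
  define e where "e = sorted_list_of_set V"
  have fV: "finite V" unfolding V_def by simp
  have le: "length e = n - k" unfolding e_def using cV fV by simp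
  have se: "set e = V" unfolding e_def using fV by simp
  have de: "distinct e" unfolding e_def by simp
  have sorte: "sorted e" unfolding e_def by simp
  have ek: "e ! i < e ! j" if "i < j" "j < length e" for i j
  proof -
    have "e ! i \<le> e ! j" using sorte that by (simp add: sorted_iff_nth_mono)
    moreover have "e ! i \<noteq> e ! j" using de that nth_eq_iff_index_eq by (metis less_trans nat_neq_iff)
    ultimately show ?thesis by simp
  qed
  define R where "R t = card {s. s < n \<and> (\<exists>b. f ! s = Some b \<and> b < the (f ! t))}" for t
  have Rlt: "R t < n - k" if "t < n" "f ! t = Some a" for t a
  proof -
    have "{s. s < n \<and> (\<exists>b. f ! s = Some b \<and> b < the (f ! t))} \<subseteq> S - {t}" unfolding S_def using that by auto
    hence "R t \<le> card (S - {t})" unfolding R_def by (intro card_mono) (auto simp: S_def)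
    moreover have "t \<in> S" unfolding S_def using that by simp
    hence "card (S - {t}) = n - k - 1" using cS by (simp add: S_def)
    moreover have "0 < n - k" using \<open>t \<in> S\<close> cS by (metis card_gt_0_iff finite_subset empty_iff S_def mem_Collect_eq subsetI finite_lessThan lessThan_iff)
    ultimately show ?thesis by simp
  qed
  have Rmono: "R t < R t'" if "t < n" "t' < n" "f ! t = Some a" "f ! t' = Some a'" "a < a'" for t t' a a'
  proof -
    let ?A = "{s. s < n \<and> (\<exists>b. f ! s = Some b \<and> b < the (f ! t))}"
    let ?B = "{s. s < n \<and> (\<exists>b. f ! s = Some b \<and> b < the (f ! t'))}"
    have "?A \<subseteq> ?B" using that by auto
    moreover have "t \<in> ?B" "t \<notin> ?A" using that by auto
    ultimately have "?A \<subset> ?B" by blast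
    thus ?thesis unfolding R_def by (intro psubset_card_mono) auto
  qed
  define val where "val t = (case f ! t of None \<Rightarrow> the (map_of (zip D xs) t) | Some a \<Rightarrow> e ! R t)" for t
  have valN: "val (D ! j) = xs ! j" if "j < k" for j
  proof -
    have "D ! j \<in> set D" using that unfolding k_def by simp
    hence "f ! (D ! j) = None" using setD by simp
    thus ?thesis unfolding val_def using map_of_zip_nth[OF xl[symmetric] dD, of j] that xl k_def by simp
  qed
  have valNone: "\<exists>j<k. t = D ! j \<and> val t = xs ! j" if "t < n" "f ! t = None" for t
  proof -
    have "t \<in> set D" using that setD by simp
    then obtain j where "j < k" "t = D ! j" unfolding k_def by (auto simp: in_set_conv_nth)
    thus ?thesis using valN by auto
  qed
  have valSome: "val t = e ! R t \<and> R t < n - k" if "t < n" "f ! t = Some a" for t a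
    using that Rlt unfolding val_def by simp
  define p where "p = map val [0..<n]"
  have lp: "length p = n" unfolding p_def by simp
  have pn: "p ! t = val t" if "t < n" for t unfolding p_def using that by simp
  have vin: "val t \<in> set xs \<and> f ! t = None \<or> val t \<in> V \<and> f ! t \<noteq> None" if tn: "t < n" for t
  proof (cases "f ! t")
    case None
    then obtain j where "j < k" "val t = xs ! j" using valNone tn by blast
    thus ?thesis using None xl k_def by auto
  next
    case (Some a)
    thus ?thesis using valSome[OF tn Some] le se by auto
  qed
  have vrange: "val t \<in> {1..n}" if "t < n" for t using vin[OF that] xsub V_def by auto
  have vinj: "val i \<noteq> val j" if ij: "i < n" "j < n" "i \<noteq> j" for i j
  proof (cases "f ! i")
    case None note fi = None
    show ?thesis
    proof (cases "f ! j")
      case None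
      obtain ji where ji: "ji < k" "i = D ! ji" "val i = xs ! ji" using valNone ij fi by blast
      obtain jj where jj: "jj < k" "j = D ! jj" "val j = xs ! jj" using valNone ij None by blast
      show ?thesis
      proof
        assume "val i = val j"
        hence "ji = jj" using ji jj xd xl k_def nth_eq_iff_index_eq by metis
        thus False using ji jj ij by simp
      qed
    next
      case (Some b)
      thus ?thesis using vin[OF that(1)] vin[OF that(2)] fi V_def by auto
    qed
  next
    case (Some a) note fi = Some
    show ?thesis
    proof (cases "f ! j")
      case None
      thus ?thesis using vin[OF that(1)] vin[OF that(2)] fi V_def by auto
    next
      case (Some b)
      show ?thesis
      proof
        assume ev: "val i = val j"
        have vi: "val i = e ! R i" "R i < length e" using valSome[OF that(1) fi] le by auto
        have vj: "val j = e ! R j" "R j < length e" using valSome[OF that(2) Some] le by auto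
        have "R i = R j" using ev vi vj de nth_eq_iff_index_eq by metis
        moreover have "a \<noteq> b" using dint[OF di, of i j a] that fi Some len by auto
        ultimately show False using Rmono[OF that(1,2) fi Some] Rmono[OF that(2,1) Some fi] by (cases "a < b") auto
      qed
    qed
  qed
  have dp: "distinct p"
    unfolding distinct_conv_nth lp using vinj pn by auto
  have "set p \<subseteq> {1..n}" unfolding p_def using vrange by auto
  moreover have "card (set p) = n" using dp lp distinct_card by metis
  ultimately have sp: "set p = {1..n}" by (intro card_subset_eq) auto
  have perm: "is_perm n p" unfolding is_perm_def using lp dp sp by simp
  have cons: "consN f p" unfolding consN_def len
  proof (intro allI impI)
    fix i j a b assume i: "i < n" and j: "j < n" and fa: "f ! i = Some a" and fb: "f ! j = Some b"
    have vi: "p ! i = e ! R i" "R i < length e" using valSome[OF i fa] le pn i by auto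
    have vj: "p ! j = e ! R j" "R j < length e" using valSome[OF j fb] le pn j by auto
    show "a < b \<longleftrightarrow> p ! i < p ! j"
    proof
      assume "a < b"
      thus "p ! i < p ! j" using Rmono[OF i j fa fb] ek vi vj by simp
    next
      assume pij: "p ! i < p ! j"
      show "a < b"
      proof (rule ccontr)
        assume "\<not> a < b"
        hence "b < a \<or> a = b" by auto
        thus False
        proof
          assume "b < a"
          thus False using Rmono[OF j i fb fa] ek vi vj pij by fastforce
        next
          assume "a = b"
          hence "i = j" using dint[OF di, of i j a] i j fa fb len by simp
          thus False using pij by simp
        qed
      qed
    qed
  qed
  have "map (\<lambda>t. p ! t) D = xs"
  proof (rule nth_equalityI)
    show "length (map (\<lambda>t. p ! t) D) = length xs" using xl by simp
  next
    fix j assume "j < length (map (\<lambda>t. p ! t) D)"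
    hence j: "j < k" unfolding k_def by simp
    have "D ! j < n" using j setD nth_mem unfolding k_def by fastforce
    thus "map (\<lambda>t. p ! t) D ! j = xs ! j" using j pn valN unfolding k_def by simp
  qed
  thus ?thesis using perm cons by blast
qed

lemma count_cov:
  assumes len: "length f = n" and di: "distinct_ints f"
  shows "card {p. is_perm n p \<and> covers f p} * fact (n - card {t. t < n \<and> f ! t = None}) = fact n"
proof -
  define D where "D = filter (\<lambda>t. f ! t = None) [0..<n]"
  define k where "k = length D"
  have setD: "set D = {t. t < n \<and> f ! t = None}" unfolding D_def by auto
  have dD: "distinct D" unfolding D_def by simp
  have ck: "card {t. t < n \<and> f ! t = None} = k" unfolding k_def using setD dD distinct_card by metis
  have kn: "k \<le> n"
  proof -
    have "card {t. t < n \<and> f ! t = None} \<le> card {..<n}" by (intro card_mono) auto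
    thus ?thesis using ck by simp
  qed
  define L where "L = {xs. length xs = k \<and> distinct xs \<and> set xs \<subseteq> {1..n}}"
  define C where "C = {p. is_perm n p \<and> covers f p}"
  have C': "C = {p. is_perm n p \<and> consN f p}" unfolding C_def using cov_iff_consN[OF len] by blast
  define \<Phi> where "\<Phi> p = map (\<lambda>t. p ! t) D" for p :: "nat list"
  have bij: "bij_betw \<Phi> C L"
  proof (rule bij_betw_imageI)
    show "inj_on \<Phi> C"
    proof (rule inj_onI)
      fix p q assume pC: "p \<in> C" and qC: "q \<in> C" and e: "\<Phi> p = \<Phi> q"
      have agree: "\<forall>t<n. f ! t = None \<longrightarrow> p ! t = q ! t"
      proof (intro allI impI)
        fix t assume "t < n" "f ! t = None"
        hence "t \<in> set D" using setD by simp
        then obtain j where j: "j < length D" "t = D ! j" by (auto simp: in_set_conv_nth)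
        have "\<Phi> p ! j = \<Phi> q ! j" using e by simp
        thus "p ! t = q ! t" using j unfolding \<Phi>_def by simp
      qed
      show "p = q" using inj_cov[OF len _ _ _ _ agree] pC qC unfolding C' by auto
    qed
    show "\<Phi> ` C = L"
    proof
      show "\<Phi> ` C \<subseteq> L"
      proof
        fix xs assume "xs \<in> \<Phi> ` C"
        then obtain p where pC: "p \<in> C" and xs: "xs = \<Phi> p" by auto
        have lp: "length p = n" and dp: "distinct p" and sp: "set p = {1..n}" using pC unfolding C_def is_perm_def by auto
        have Dn: "t < n" if "t \<in> set D" for t using that setD by simp
        have "inj_on (\<lambda>t. p ! t) (set D)"
          using dp lp Dn by (auto simp: inj_on_def nth_eq_iff_index_eq)
        hence "distinct xs" unfolding xs \<Phi>_def using dD by (simp add: distinct_map)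
        moreover have "set xs \<subseteq> {1..n}" unfolding xs \<Phi>_def using Dn lp sp nth_mem by fastforce
        moreover have "length xs = k" unfolding xs \<Phi>_def k_def by simp
        ultimately show "xs \<in> L" unfolding L_def by simp
      qed
    next
      show "L \<subseteq> \<Phi> ` C"
      proof
        fix xs assume "xs \<in> L"
        hence "length xs = length D" "distinct xs" "set xs \<subseteq> {1..n}" unfolding L_def k_def by auto
        then obtain p where "is_perm n p" "consN f p" "map (\<lambda>t. p ! t) D = xs"
          using surj_cov[OF len di D_def] by blast
        thus "xs \<in> \<Phi> ` C" unfolding C' \<Phi>_def by auto
      qed
    qed
  qed
  have "card C = card L" using bij_betw_same_card[OF bij] .
  also have "\<dots> = \<Prod>{n - k + 1..n}" unfolding L_def using card_lists_distinct_length_eq[of "{1..n}" k] kn by simp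
  finally have cC: "card C = \<Prod>{n - k + 1..n}" .
  have "fact n div fact (n - k) = \<Prod>{n - k + 1..n}" using fact_div_fact[of "n - k" n] by simp
  moreover have "fact (n - k) dvd (fact n :: nat)" by (rule fact_dvd) simp
  ultimately have "\<Prod>{n - k + 1..n} * fact (n - k) = (fact n :: nat)" by (metis dvd_div_mult_self)
  thus ?thesis using cC ck unfolding C_def by simp
qed

lemma card_sum_bool: fixes n :: nat shows "card {t. t < n \<and> P t} = (\<Sum>t<n. if P t then 1 else (0::nat))"
proof -
  have "card {t. t < n \<and> P t} = card {t \<in> {..<n}. P t}" by (rule arg_cong[where f=card]) auto
  also have "\<dots> = (\<Sum>t\<in>{t \<in> {..<n}. P t}. 1)" by simp
  also have "\<dots> = (\<Sum>t<n. if P t then 1 else 0)" by (rule sum.inter_filter) (rule finite_lessThan)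
  finally show ?thesis .
qed

lemma card_shift:
  fixes n :: nat
  assumes per: "Q (i + n) = Q i"
  shows "card {t. t < n \<and> Q (Suc i + t)} = card {t. t < n \<and> Q (i + t)}"
proof -
  define g where "g m = (if Q m then 1 else (0::nat))" for m
  have "(\<Sum>t<Suc n. g (i + t)) = g (i + 0) + (\<Sum>t<n. g (i + Suc t))" by (rule sum.lessThan_Suc_shift)
  moreover have "(\<Sum>t<Suc n. g (i + t)) = (\<Sum>t<n. g (i + t)) + g (i + n)" by simp
  moreover have "g (i + n) = g i" unfolding g_def using per by simp
  ultimately have "(\<Sum>t<n. g (Suc i + t)) = (\<Sum>t<n. g (i + t))" by simp
  thus ?thesis unfolding card_sum_bool g_def .
qed

lemma card_perms: "card {p. is_perm n p} = fact n"
proof -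
  have "{p. is_perm n p} = permutations_of_set {1..n}"
    unfolding permutations_of_set_def is_perm_def
    by (auto dest: distinct_card)
  thus ?thesis by simp
qed

theorem corollary3:
  fixes n :: nat
  assumes "prime n \<or> n = 4"
  shows "\<not> (\<exists>u. upcycle n u)"
proof
  assume "\<exists>u. upcycle n u"
  then obtain u where up: "upcycle n u" by blast
  have n2: "2 \<le> n" using assms prime_ge_2_nat by auto
  define N where "N = length u"
  have Nn: "n \<le> N" using up unfolding upcycle_def N_def by simp
  hence N0: "0 < N" using n2 by simp
  define w where "w i = cfactor u n i" for i
  have wn: "w i ! t = u ! ((i + t) mod N)" if "t < n" for i t
    using that unfolding w_def N_def by (simp add: cf_nth)
  have fwd: "u ! ((m + n) mod N) = None" if "u ! (m mod N) = None" for m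
  proof -
    have "u ! ((m mod N + n) mod N) = None" using stepA[OF up n2, of "m mod N"] that N0 N_def by simp
    thus ?thesis by (simp add: mod_add_left_eq)
  qed
  have iter: "u ! ((m + j * n) mod N) = None" if "u ! (m mod N) = None" for m j
  proof (induction j)
    case 0 thus ?case using that by simp
  next
    case (Suc j)
    have "u ! ((m + j * n) mod N mod N) = None" using Suc by simp
    hence "u ! ((m + j * n + n) mod N) = None" using fwd[of "m + j * n"] by simp
    moreover have "m + j * n + n = m + Suc j * n" by simp
    ultimately show ?case by metis
  qed
  have bwd: "u ! (m mod N) = None" if "u ! ((m + n) mod N) = None" for m
  proof -
    have "u ! ((m + n) mod N mod N) = None" using that by simp
    hence "u ! ((m + n + (N - 1) * n) mod N) = None" using iter[of "m + n" "N - 1"] by simp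
    moreover have "m + n + (N - 1) * n = m + N * n" using N0 by (cases N) (auto simp: algebra_simps)
    ultimately have "u ! ((m + N * n) mod N) = None" by metis
    thus ?thesis by simp
  qed
  define Q where "Q m = (u ! (m mod N) = None)" for m
  have perQ: "Q (m + n) = Q m" for m unfolding Q_def using fwd bwd by blast
  define k where "k i = card {t. t < n \<and> w i ! t = None}" for i
  have kQ: "k i = card {t. t < n \<and> Q (i + t)}" for i
    unfolding k_def Q_def by (rule arg_cong[where f=card]) (auto simp: wn)
  have kconst: "k i = k 0" for i
  proof (induction i)
    case (Suc i)
    have "k (Suc i) = k i" unfolding kQ by (rule card_shift[of Q i n, OF perQ[of i]])
    thus ?case using Suc by simp
  qed simp
  have kn: "k 0 \<le> n"
  proof -
    have "k 0 \<le> card {..<n}" unfolding k_def by (intro card_mono) auto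
    thus ?thesis by simp
  qed
  obtain p0 where p0: "p0 < N" "u ! p0 = None" using up unfolding upcycle_def N_def by (auto simp: in_set_conv_nth)
  have k1: "1 \<le> k 0"
  proof -
    have "w p0 ! 0 = None" using wn[of 0 p0] n2 p0 by simp
    hence "0 \<in> {t. t < n \<and> w p0 ! t = None}" using n2 by simp
    hence "0 < k p0" unfolding k_def by (subst card_gt_0_iff) auto
    thus ?thesis using kconst[of p0] by simp
  qed
  define C where "C i = {p. is_perm n p \<and> covers (w i) p}" for i
  have cC: "card (C i) * fact (n - k 0) = fact n" for i
    using count_cov[of "w i" n] up_di[OF up, of i] kconst[of i] unfolding C_def k_def w_def by simp
  have finP: "finite {p. is_perm n p}"
  proof -
    have "{p. is_perm n p} = permutations_of_set {1..n}"
      unfolding permutations_of_set_def is_perm_def by (auto dest: distinct_card)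
    thus ?thesis by simp
  qed
  have UC: "{p. is_perm n p} = (\<Union>i<N. C i)"
    using up unfolding C_def w_def N_def upcycle_def by blast
  have disj: "C i \<inter> C j = {}" if "i < N" "j < N" "i \<noteq> j" for i j
    using up_unique[OF up, of _ i j] that unfolding C_def w_def N_def by blast
  have finC: "finite (C i)" for i using finP unfolding C_def by (rule finite_subset[rotated]) auto
  have "fact n = card (\<Union>i<N. C i)" using UC card_perms[of n] by metis
  also have "\<dots> = (\<Sum>i<N. card (C i))" using finC disj by (intro card_UN_disjoint) auto
  also have "\<dots> = (\<Sum>i<N. card (C 0))"
  proof (rule sum.cong)
    fix i
    have "card (C i) * fact (n - k 0) = card (C 0) * fact (n - k 0)" using cC[of i] cC[of 0] by simp
    thus "card (C i) = card (C 0)" by simp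
  qed simp
  finally have "fact n = N * card (C 0)" by simp
  hence "card (C 0) * fact (n - k 0) = card (C 0) * N" using cC[of 0] by (metis mult.commute)
  moreover have "card (C 0) \<noteq> 0" using cC[of 0] by (metis fact_nonzero mult_eq_0_iff)
  ultimately have NF: "N = fact (n - k 0)" by simp
  define g where "g = gcd n N"
  obtain x y where bez: "n * x = N * y + g" using bezout_nat[of n N] n2 unfolding g_def by auto
  have ginv: "u ! ((m + g) mod N) = None" if "u ! (m mod N) = None" for m
  proof -
    have "u ! ((m + x * n) mod N) = None" using iter[OF that] .
    moreover have "m + x * n = (m + g) + N * y" using bez by (simp add: algebra_simps)
    ultimately show ?thesis by simp
  qed
  have giter: "u ! ((p0 + j * g) mod N) = None" for j
  proof (induction j)
    case 0 thus ?case using p0 by simp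
  next
    case (Suc j)
    have "u ! ((p0 + j * g) mod N mod N) = None" using Suc by simp
    hence "u ! ((p0 + j * g + g) mod N) = None" using ginv[of "p0 + j * g"] by simp
    thus ?case by (simp add: algebra_simps)
  qed
  have gdvd: "g dvd n" "g dvd N" unfolding g_def by auto
  have g0: "0 < g" unfolding g_def using n2 by simp
  show False
  proof (cases "g = n")
    case True
    hence "n dvd fact (n - k 0)" using gdvd NF by simp
    thus False
    proof -
      assume d: "n dvd fact (n - k 0)"
      show False using assms
      proof
        assume "prime n"
        hence "n \<le> n - k 0" using d prime_dvd_fact_iff by blast
        thus False using k1 n2 by simp
      next
        assume n4: "n = 4"
        have "k 0 \<in> {1,2,3,4}" using k1 kn n4 by auto
        thus False using d n4 by (auto simp: fact_numeral)
      qed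
    qed
  next
    case False
    have gn: "g < n" using False gdvd n2 by (simp add: dvd_imp_le le_neq_implies_less)
    show False using assms
    proof
      assume pr: "prime n"
      hence g1: "g = 1" using gdvd(1) False prime_nat_iff by auto
      have "\<forall>t<n. w 0 ! t = None"
      proof (intro allI impI)
        fix t assume t: "t < n"
        have "u ! ((p0 + (N - p0 + t) * g) mod N) = None" using giter by blast
        moreover have "p0 + (N - p0 + t) * g = t + N" using g1 p0 by simp
        ultimately show "w 0 ! t = None" using wn[OF t, of 0] by simp
      qed
      hence "{t. t < n \<and> w 0 ! t = None} = {..<n}" by auto
      hence "k 0 = n" unfolding k_def by simp
      hence "N = 1" using NF by simp
      thus False using Nn n2 by simp
    next
      assume n4: "n = 4"
      have "w p0 ! g = None" using wn[OF gn, of p0] giter[of 1] by simp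
      moreover have "w p0 ! 0 = None" using wn[of 0 p0] n2 p0 by simp
      ultimately have "{0, g} \<subseteq> {t. t < n \<and> w p0 ! t = None}" using gn n2 by auto
      hence "card {0, g} \<le> k p0" unfolding k_def by (intro card_mono) auto
      hence "2 \<le> k 0" using g0 kconst[of p0] by simp
      hence "k 0 \<in> {2,3,4}" using kn n4 by auto
      hence "N \<le> 2" using NF n4 by (auto simp: fact_numeral)
      thus False using Nn n4 by simp
    qed
  qed
qed

end
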